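(* Assume that $\boldsymbol{\chi}$ has Property NIO. Then there exists an $\ell$-adic character $\chi_0$, possibly over a finite extension $\mathbf{F}_{q^{\nu}}$ of $\mathbf{F}_q$, such that the tuple $\chi_0\boldsymbol{\chi}=(\chi_0\chi_1,\ldots,\chi_0\chi_k)$ has Property CGM over $\mathbf{F}_{q^{\nu}}$.
   Context: Let $\boldsymbol{\chi}=(\chi_1,\ldots,\chi_k)$, $k\geq2$, be a tuple of $\ell$-adic characters of $\mathbf{F}_q^\times$ (characters of a finite field $\mathbf{F}_{q^\nu}$ are composed with the norm when viewed over extensions), and $\Lambda=\chi_1\cdots\chi_k$. The tuple is Kummer-induced if there is a divisor $d\neq1$ of $k$ and characters $\xi_1,\ldots,\xi_{k/d}$ such that the $\chi_i$ are exactly (with multiplicity) all characters $\chi$ with $\chi^d=\xi_j$ for some $j$. It is self-dual if there is a character $\xi$ (dualizing character) such that the multiset of the $\chi_i$ is stable under $\chi\mapsto\xi\chi^{-1}$; a self-dual tuple is alternating if $k$ is even and $\Lambda=\xi^{k/2}$, symmetric otherwise. Property NIO: not Kummer-induced and, if $k$ is even, not self-dual symmetric. Property CGM: not Kummer-induced, $\chi_1\cdots\chi_k=1$, and either $k$ is odd, or the tuple is not self-dual, or $k$ is even, the tuple is self-dual alternating and the dualizing character $\xi$ is trivial. *)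

theory Defs
  imports Main "HOL-Library.Multiset" "HOL-Computational_Algebra.Primes"
begin

text \<open>Fix compatible generators g_nu of the cyclic
groups F_(q^nu)^* (with Norm(g_nu) = g_1) and compatible primitive roots of unity.
A character of F_(q^nu)^* is then encoded by its exponent a in {0..<n}, n = q^nu - 1
(chi(g_nu) = zeta_n^a).  Products of characters are sums mod n, inverses are negation
mod n, the trivial character is 0, and composing a character of F_q^* with the norm
corresponds to multiplication by (q^nu - 1) div (q - 1).\<close>

definition prime_power :: "nat \<Rightarrow> bool" where
  "prime_power q \<longleftrightarrow> (\<exists>p e. prime p \<and> e > 0 \<and> q = p ^ e)"

definition valid_tuple :: "nat \<Rightarrow> nat list \<Rightarrow> bool" where
  "valid_tuple n cs \<longleftrightarrow> (\<forall>c\<in>set cs. c < n)"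

definition kummer_induced :: "nat \<Rightarrow> nat list \<Rightarrow> bool" where
  "kummer_induced n cs \<longleftrightarrow>
    (\<exists>d xis. d dvd length cs \<and> d \<noteq> 1 \<and> length xis = length cs div d \<and>
       (\<forall>xi\<in>set xis. xi < n) \<and>
       mset cs = sum_list (map (\<lambda>xi. mset_set {x. x < n \<and> (d * x) mod n = xi}) xis))"

definition dualizing :: "nat \<Rightarrow> nat list \<Rightarrow> nat \<Rightarrow> bool" where
  "dualizing n cs xi \<longleftrightarrow> xi < n \<and>
     image_mset (\<lambda>c. (xi + n - c) mod n) (mset cs) = mset cs"

definition self_dual :: "nat \<Rightarrow> nat list \<Rightarrow> bool" where
  "self_dual n cs \<longleftrightarrow> (\<exists>xi. dualizing n cs xi)"

definition Lam :: "nat \<Rightarrow> nat list \<Rightarrow> nat" where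
  "Lam n cs = sum_list cs mod n"

definition alternating_wrt :: "nat \<Rightarrow> nat list \<Rightarrow> nat \<Rightarrow> bool" where
  "alternating_wrt n cs xi \<longleftrightarrow> dualizing n cs xi \<and> even (length cs) \<and>
     Lam n cs = (length cs div 2 * xi) mod n"

definition self_dual_symmetric :: "nat \<Rightarrow> nat list \<Rightarrow> bool" where
  "self_dual_symmetric n cs \<longleftrightarrow>
     (\<exists>xi. dualizing n cs xi \<and> \<not> (even (length cs) \<and> Lam n cs = (length cs div 2 * xi) mod n))"

definition NIO :: "nat \<Rightarrow> nat list \<Rightarrow> bool" where
  "NIO n cs \<longleftrightarrow> \<not> kummer_induced n cs \<and> (even (length cs) \<longrightarrow> \<not> self_dual_symmetric n cs)"

definition CGM :: "nat \<Rightarrow> nat list \<Rightarrow> bool" where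
  "CGM n cs \<longleftrightarrow> \<not> kummer_induced n cs \<and> Lam n cs = 0 \<and>
     (odd (length cs) \<or> \<not> self_dual n cs \<or> (even (length cs) \<and> alternating_wrt n cs 0))"

definition twist_lift :: "nat \<Rightarrow> nat \<Rightarrow> nat \<Rightarrow> nat list \<Rightarrow> nat list" where
  "twist_lift q \<nu> c0 cs =
     map (\<lambda>c. (c0 + c * ((q ^ \<nu> - 1) div (q - 1))) mod (q ^ \<nu> - 1)) cs"

end

theory Submission
  imports Defs "HOL-Number_Theory.Number_Theory"
begin


lemma liftA:
  fixes A a b m n N :: nat
  assumes "0 < m" "N = m * n"
  shows "(A + a * m) mod N = (A + b * m) mod N \<longleftrightarrow> a mod n = b mod n"
proof -
  have "(A + a * m) mod N = (A + b * m) mod N \<longleftrightarrow> [a * m = b * m] (mod N)"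
    using cong_add_lcancel_nat[of A "a*m" "b*m" N] by (simp add: cong_def)
  also have "\<dots> \<longleftrightarrow> m * (a mod n) = m * (b mod n)"
    unfolding cong_def assms(2) by (simp add: mult.commute mod_mult_mult1)
  also have "\<dots> \<longleftrightarrow> a mod n = b mod n" using assms(1) by simp
  finally show ?thesis .
qed

lemma int_neg_mod:
  fixes y z N :: nat
  assumes "y < N" 
  shows "int ((z + N - y) mod N) = (int z - int y) mod int N"
proof -
  have "int ((z + N - y) mod N) = (int z + int N - int y) mod int N"
    using assms by (simp add: of_nat_mod of_nat_diff)
  also have "\<dots> = ((int z - int y) + int N) mod int N"
    by (simp add: algebra_simps)
  also have "\<dots> = (int z - int y) mod int N"
    by (rule mod_add_self2)
  finally show ?thesis .
qed

lemma card_kummer_le: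
  fixes d N xi :: nat
  assumes "0 < d"
  shows "card {x. x < N \<and> d * x mod N = xi} \<le> d"
proof -
  have "inj_on (\<lambda>x. d * x div N) {x. x < N \<and> d * x mod N = xi}"
  proof (rule inj_onI)
    fix x y assume "x \<in> {x. x < N \<and> d * x mod N = xi}" "y \<in> {x. x < N \<and> d * x mod N = xi}"
      "d * x div N = d * y div N"
    moreover have "d * x = d * x div N * N + d * x mod N" "d * y = d * y div N * N + d * y mod N"
      by simp_all
    ultimately have "d * x = d * y" by simp
    then show "x = y" using assms by simp
  qed
  moreover have "(\<lambda>x. d * x div N) ` {x. x < N \<and> d * x mod N = xi} \<subseteq> {..<d}"
  proof
    fix z assume "z \<in> (\<lambda>x. d * x div N) ` {x. x < N \<and> d * x mod N = xi}"
    then obtain x where x: "x < N" "z = d * x div N" by auto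
    have "d * x < d * N" using x assms by simp
    then show "z \<in> {..<d}" using x by (simp add: div_less_iff_less_mult mult.commute)
  qed
  ultimately have "card {x. x < N \<and> d * x mod N = xi} \<le> card {..<d}"
    by (intro card_inj_on_le) auto
  then show ?thesis by simp
qed

lemma size_sum_list_map:
  fixes F :: "'a \<Rightarrow> 'b multiset"
  shows   "size (sum_list (map F xs)) = sum_list (map (\<lambda>x. size (F x)) xs)"
  by (induction xs) auto

lemma set_sum_list_map:
  "x \<in> set xs \<Longrightarrow> set_mset (F x) \<subseteq> set_mset (sum_list (map F xs))"
  by (induction xs) auto

lemma image_sum_list_map:
  "image_mset g (sum_list (map F xs)) = sum_list (map (\<lambda>x. image_mset g (F x)) xs)"
  by (induction xs) auto

lemma sum_list_all_eq:
  fixes h :: "'a \<Rightarrow> nat"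
  assumes "\<forall>x\<in>set xs. h x \<le> d" "sum_list (map h xs) = length xs * d" "x \<in> set xs"
  shows "h x = d"
  using assms
proof (induction xs)
  case Nil then show ?case by simp
next
  case (Cons a xs)
  have "sum_list (map h xs) \<le> length xs * d"
    using Cons.prems(1) by (induction xs) auto
  then have "h a = d" "sum_list (map h xs) = length xs * d" using Cons.prems(1,2) by auto
  then show ?case using Cons by auto
qed



lemma kummer_lift:
  fixes n m N c0 :: nat and cs :: "nat list"
  assumes n: "0 < n" and m: "0 < m" and N: "N = m * n" and ne: "cs \<noteq> []"
    and v: "valid_tuple n cs"
    and ki: "kummer_induced N (map (\<lambda>c. (c0 + c * m) mod N) cs)"
  shows "kummer_induced n cs"
proof -
  define f where "f = (\<lambda>c. (c0 + c * m) mod N)"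
  have Npos: "0 < N" using n m N by simp
  have finj: "inj_on f {..<n}"
  proof (rule inj_onI)
    fix a b assume "a \<in> {..<n}" "b \<in> {..<n}" "f a = f b"
    then show "a = b" using liftA[OF m N, of c0 a b] unfolding f_def by simp
  qed
  define g where "g = inv_into {..<n} f"
  have gf: "g (f c) = c" if "c < n" for c
    using finj that unfolding g_def by (simp add: inv_into_f_f)
  have csn: "c < n" if "c \<in> set cs" for c using v that unfolding valid_tuple_def by auto
  from ki obtain d xis where H: "d dvd length (map f cs) \<and> d \<noteq> 1 \<and> length xis = length (map f cs) div d \<and>
       (\<forall>xi\<in>set xis. xi < N) \<and>
       mset (map f cs) = sum_list (map (\<lambda>xi. mset_set {x. x < N \<and> (d * x) mod N = xi}) xis)"
    unfolding kummer_induced_def f_def by blast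
  then have d: "d dvd length cs" "d \<noteq> 1" and lx: "length xis = length cs div d"
    and xl: "\<forall>xi\<in>set xis. xi < N"
    and eq: "mset (map f cs) = sum_list (map (\<lambda>xi. mset_set {x. x < N \<and> (d * x) mod N = xi}) xis)"
    by auto
  define T where "T = (\<lambda>xi. {x. x < N \<and> (d * x) mod N = xi})"
  have finT: "finite (T xi)" for xi unfolding T_def by auto
  have dpos: "0 < d" using d ne by (metis dvd_0_left_iff gr0I length_0_conv)
  have cardT: "card (T xi) \<le> d" for xi unfolding T_def by (rule card_kummer_le[OF dpos])
  have "length cs = size (mset (map f cs))" by simp
  also have "\<dots> = sum_list (map (\<lambda>xi. card (T xi)) xis)"
    unfolding eq size_sum_list_map T_def by simp
  finally have "sum_list (map (\<lambda>xi. card (T xi)) xis) = length xis * d"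
    using lx d(1) by simp
  then have cT: "card (T xi) = d" if "xi \<in> set xis" for xi
    using sum_list_all_eq[of xis "\<lambda>xi. card (T xi)" d xi] cardT that by simp
  have Tsub: "T xi \<subseteq> f ` set cs" if "xi \<in> set xis" for xi
  proof -
    have "set_mset (mset_set (T xi)) \<subseteq> set_mset (mset (map f cs))"
      unfolding eq T_def using set_sum_list_map[OF that, of "\<lambda>xi. mset_set {x. x < N \<and> (d * x) mod N = xi}"] 
      by simp
    then show ?thesis using finT by simp
  qed
  define U where "U = (\<lambda>e. {x. x < n \<and> (d * x) mod n = e})"
  define eta where "eta = (\<lambda>xi. (d * g (SOME y. y \<in> T xi)) mod n)"
  have dfm: "d * f c mod N = (d * c0 + (d * c) * m) mod N" for c
    unfolding f_def by (simp add: mod_mult_right_eq algebra_simps)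
  have key: "g ` T xi = U (eta xi) \<and> inj_on g (T xi)" if xi: "xi \<in> set xis" for xi
  proof -
    have "T xi \<noteq> {}" using cT[OF xi] dpos by auto
    then have y0: "(SOME y. y \<in> T xi) \<in> T xi" by (simp add: some_in_eq)
    then obtain cs0 where cs0: "cs0 \<in> set cs" "(SOME y. y \<in> T xi) = f cs0" using Tsub[OF xi] by auto
    have e: "eta xi = d * cs0 mod n" unfolding eta_def cs0(2) using gf csn cs0 by simp
    have dxi: "d * f cs0 mod N = xi" using y0 cs0 unfolding T_def by simp
    have "inj_on g (T xi)"
    proof (rule inj_onI)
      fix y1 y2 assume "y1 \<in> T xi" "y2 \<in> T xi" "g y1 = g y2"
      then obtain a b where ab: "a \<in> set cs" "b \<in> set cs" "y1 = f a" "y2 = f b" "g y1 = g y2"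
        using Tsub[OF xi] by blast
      then have "a = b" using gf csn by metis
      then show "y1 = y2" using ab by simp
    qed
    moreover have "g ` T xi \<subseteq> U (eta xi)"
    proof
      fix z assume "z \<in> g ` T xi"
      then obtain y where y: "y \<in> T xi" "z = g y" by blast
      then obtain c where "c \<in> set cs" "y = f c" using Tsub[OF xi] by blast
      then have c: "c \<in> set cs" "f c \<in> T xi" "z = c" using y gf csn by auto
      have "d * f c mod N = d * f cs0 mod N" using c dxi unfolding T_def by simp
      then have "(d * c) mod n = (d * cs0) mod n" unfolding dfm using liftA[OF m N] by simp
      then show "z \<in> U (eta xi)" using c csn e unfolding U_def by simp
    qed
    moreover have "U (eta xi) \<subseteq> g ` T xi"
    proof
      fix c assume "c \<in> U (eta xi)"
      then have c: "c < n" "(d * c) mod n = (d * cs0) mod n" unfolding U_def e by auto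
      then have "d * f c mod N = d * f cs0 mod N" unfolding dfm using liftA[OF m N] by simp
      moreover have "f c < N" unfolding f_def using Npos by simp
      ultimately have "f c \<in> T xi" using dxi unfolding T_def by simp
      then show "c \<in> g ` T xi" using gf[OF c(1)] by force
    qed
    ultimately show ?thesis by blast
  qed
  have "mset cs = image_mset g (mset (map f cs))"
    using gf csn by (induction cs) auto
  also have "\<dots> = sum_list (map (\<lambda>xi. image_mset g (mset_set (T xi))) xis)"
    unfolding eq image_sum_list_map T_def by simp
  also have "\<dots> = sum_list (map (\<lambda>xi. mset_set (U (eta xi))) xis)"
    by (intro arg_cong[where f=sum_list] map_cong refl) (simp add: image_mset_mset_set key)
  also have "\<dots> = sum_list (map (\<lambda>e. mset_set {x. x < n \<and> (d * x) mod n = e}) (map eta xis))"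
    unfolding U_def by (simp add: comp_def)
  finally have "mset cs = sum_list (map (\<lambda>e. mset_set {x. x < n \<and> (d * x) mod n = e}) (map eta xis))" .
  moreover have "\<forall>e\<in>set (map eta xis). e < n" unfolding eta_def using n by auto
  ultimately show ?thesis unfolding kummer_induced_def using d lx
    by (intro exI[of _ d] exI[of _ "map eta xis"]) auto
qed


lemma int_f: "int ((c0 + c * m) mod N) = (int c0 + int c * int m) mod int N"
  by (simp add: of_nat_mod)

lemma selfdual_lift:
  fixes n m N c0 :: nat and cs :: "nat list"
  assumes n: "0 < n" and m: "0 < m" and N: "N = m * n" and ne: "cs \<noteq> []"
    and v: "valid_tuple n cs"
    and sd: "self_dual N (map (\<lambda>c. (c0 + c * m) mod N) cs)"
  shows "self_dual n cs"
proof -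
  define f where "f = (\<lambda>c. (c0 + c * m) mod N)"
  have Npos: "0 < N" using n m N by simp
  have finj: "inj_on f {..<n}"
  proof (rule inj_onI)
    fix a b assume "a \<in> {..<n}" "b \<in> {..<n}" "f a = f b"
    then show "a = b" using liftA[OF m N, of c0 a b] unfolding f_def by simp
  qed
  define g where "g = inv_into {..<n} f"
  have gf: "g (f c) = c" if "c < n" for c
    using finj that unfolding g_def by (simp add: inv_into_f_f)
  have csn: "c < n" if "c \<in> set cs" for c using v that unfolding valid_tuple_def by auto
  have fmod: "f (x mod n) = f x" for x unfolding f_def using liftA[OF m N] by simp
  from sd obtain z where z: "z < N" and hz: "image_mset (\<lambda>c. (z + N - c) mod N) (mset (map f cs)) = mset (map f cs)"
    unfolding self_dual_def dualizing_def f_def by blast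
  define h where "h = (\<lambda>c. (z + N - c) mod N)"
  define c1 where "c1 = hd cs"
  have c1: "c1 \<in> set cs" using ne unfolding c1_def by simp
  have hz': "image_mset h (mset (map f cs)) = mset (map f cs)" using hz unfolding h_def .
  have "h (f c1) \<in># image_mset h (mset (map f cs))" using c1 by simp
  then have "h (f c1) \<in># mset (map f cs)" by (simp only: hz')
  then have "h (f c1) \<in> f ` set cs" by simp
  then obtain c2 where c2: "c2 \<in> set cs" "h (f c1) = f c2" by blast
  define eta where "eta = (c1 + c2) mod n"
  have fl: "f c < N" for c unfolding f_def using Npos by simp
  have hf: "int (h y) = (int z - int y) mod int N" if "y < N" for y
    unfolding h_def using int_neg_mod[OF that] .
  have claim: "h (f c) = f (eta + n - c)" if c: "c < n" for c
  proof -
    have e1: "(int z - (int c0 + int c1 * int m) mod int N) mod int N = (int c0 + int c2 * int m) mod int N"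
      using arg_cong[OF c2(2), of int] hf[OF fl] unfolding f_def int_f by simp
    then have "int N dvd (int z - (int c0 + int c1 * int m)) - (int c0 + int c2 * int m)"
      by (simp add: mod_eq_dvd_iff mod_diff_right_eq)
    moreover have "int n dvd int eta - (int c1 + int c2)"
      unfolding eta_def of_nat_mod of_nat_add by (subst mod_eq_dvd_iff[symmetric]) simp
    then have "int N dvd (int eta - (int c1 + int c2)) * int m" unfolding N by (simp add: mult.commute)
    moreover have "int N dvd int n * int m" unfolding N by simp
    ultimately have "int N dvd ((int z - (int c0 + int c1 * int m)) - (int c0 + int c2 * int m))
        - (int eta - (int c1 + int c2)) * int m - int n * int m"
      by (rule dvd_diff[OF dvd_diff])
    moreover have "((int z - (int c0 + int c1 * int m)) - (int c0 + int c2 * int m))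
        - (int eta - (int c1 + int c2)) * int m - int n * int m
        = (int z - (int c0 + int c * int m)) - (int c0 + int (eta + n - c) * int m)"
      using c by (simp add: of_nat_diff algebra_simps)
    ultimately have "int N dvd (int z - (int c0 + int c * int m)) - (int c0 + int (eta + n - c) * int m)"
      by metis
    then have "(int z - (int c0 + int c * int m)) mod int N = (int c0 + int (eta + n - c) * int m) mod int N"
      by (simp only: mod_eq_dvd_iff)
    then have "int (h (f c)) = int (f (eta + n - c))"
      using hf[OF fl] unfolding f_def int_f by (simp add: mod_diff_right_eq)
    then show ?thesis by simp
  qed
  have "image_mset (\<lambda>c. (eta + n - c) mod n) (mset cs) = image_mset (\<lambda>c. g (h (f c))) (mset cs)"
  proof (rule image_mset_cong)
    fix c assume "c \<in># mset cs"
    then have c: "c < n" using csn by simp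
    have "g (h (f c)) = g (f ((eta + n - c) mod n))" using claim[OF c] fmod by simp
    also have "\<dots> = (eta + n - c) mod n" using gf n by simp
    finally show "(eta + n - c) mod n = g (h (f c))" by simp
  qed
  also have "\<dots> = image_mset g (image_mset h (mset (map f cs)))" by (simp add: image_mset.compositionality comp_def)
  also have "\<dots> = image_mset g (mset (map f cs))" using hz unfolding h_def by simp
  also have "\<dots> = mset cs" using gf csn by (induction cs) auto
  finally have "dualizing n cs eta" unfolding dualizing_def eta_def using n by simp
  then show ?thesis unfolding self_dual_def by blast
qed

lemma dual_twist:
  fixes n m N c0 xi :: nat and cs :: "nat list"
  assumes n: "0 < n" and m: "0 < m" and N: "N = m * n"
    and v: "valid_tuple n cs"
    and du: "dualizing n cs xi"
    and c0: "(2 * c0 + m * xi) mod N = 0"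
  shows "dualizing N (map (\<lambda>c. (c0 + c * m) mod N) cs) 0"
proof -
  define f where "f = (\<lambda>c. (c0 + c * m) mod N)"
  have Npos: "0 < N" using n m N by simp
  have csn: "c < n" if "c \<in> set cs" for c using v that unfolding valid_tuple_def by auto
  have fmod: "f (x mod n) = f x" for x unfolding f_def using liftA[OF m N] by simp
  have fl: "f c < N" for c unfolding f_def using Npos by simp
  have hx: "image_mset (\<lambda>c. (xi + n - c) mod n) (mset cs) = mset cs" using du unfolding dualizing_def by simp
  have "image_mset (\<lambda>y. (0 + N - y) mod N) (mset (map f cs)) = image_mset (\<lambda>c. f ((xi + n - c) mod n)) (mset cs)"
    unfolding mset_map image_mset.compositionality comp_def
  proof (rule image_mset_cong)
    fix c assume "c \<in># mset cs"
    then have c: "c < n" using csn by simp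
    have "int N dvd int (2 * c0 + m * xi)" using c0 by (simp add: dvd_eq_mod_eq_0 of_nat_mod[symmetric] del: of_nat_mult of_nat_add)
    moreover have "int N dvd int n * int m" unfolding N by simp
    ultimately have "int N dvd - int (2 * c0 + m * xi) - int n * int m" by (intro dvd_diff) (simp only: dvd_minus_iff)+
    moreover have "- int (2 * c0 + m * xi) - int n * int m = (0 - (int c0 + int c * int m)) - (int c0 + int (xi + n - c) * int m)"
      using c by (simp add: of_nat_diff algebra_simps)
    ultimately have "int N dvd (0 - (int c0 + int c * int m)) - (int c0 + int (xi + n - c) * int m)"
      by metis
    then have "(0 - (int c0 + int c * int m)) mod int N = (int c0 + int (xi + n - c) * int m) mod int N"
      by (simp only: mod_eq_dvd_iff)
    note E = this
    have "int ((0 + N - f c) mod N) = (int 0 - int (f c)) mod int N" by (rule int_neg_mod[OF fl])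
    also have "\<dots> = (0 - (int c0 + int c * int m)) mod int N"
      unfolding f_def int_f by (simp only: of_nat_0 mod_diff_right_eq)
    also have "\<dots> = (int c0 + int (xi + n - c) * int m) mod int N" by (rule E)
    also have "\<dots> = int (f (xi + n - c))" unfolding f_def int_f ..
    finally have "int ((0 + N - f c) mod N) = int (f (xi + n - c))" .
    then show "(0 + N - f c) mod N = f ((xi + n - c) mod n)" using fmod by simp
  qed
  also have "\<dots> = image_mset f (image_mset (\<lambda>c. (xi + n - c) mod n) (mset cs))"
    by (simp add: image_mset.compositionality comp_def)
  also have "\<dots> = mset (map f cs)" using hx by simp
  finally show ?thesis unfolding dualizing_def f_def using Npos by simp
qed

lemma lam_twist:
  "sum_list (map (\<lambda>c. (c0 + c * m) mod N) cs) mod N = (length cs * c0 + m * sum_list cs) mod N"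
proof (induction cs)
  case Nil then show ?case by simp
next
  case (Cons a cs)
  have "sum_list (map (\<lambda>c. (c0 + c * m) mod N) (a # cs)) mod N
     = ((c0 + a * m) mod N + sum_list (map (\<lambda>c. (c0 + c * m) mod N) cs) mod N) mod N"
    by (simp add: mod_simps)
  also have "\<dots> = ((c0 + a * m) + (length cs * c0 + m * sum_list cs)) mod N"
    unfolding Cons.IH by (simp add: mod_add_eq)
  also have "\<dots> = (length (a # cs) * c0 + m * sum_list (a # cs)) mod N"
    by (simp add: algebra_simps)
  finally show ?case .
qed



lemma solve_lin:
  fixes a b N :: nat
  assumes "0 < N" "gcd a N dvd b"
  shows "\<exists>x<N. (a * x + b) mod N = 0"
proof -
  have "gcd a N dvd b * (N - 1)" using assms(2) by simp
  from cong_solve_dvd_nat[OF this] obtain x where x: "[a * x = b * (N - 1)] (mod N)" by blast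
  then have "[a * x + b = b * (N - 1) + b] (mod N)" by (intro cong_add) auto
  moreover have "b * (N - 1) + b = b * N" using assms(1) by (cases N) (auto simp: algebra_simps)
  ultimately have "(a * x + b) mod N = 0" by (simp add: cong_def)
  then have "(a * (x mod N) + b) mod N = 0" by (metis mod_add_left_eq mod_mult_right_eq)
  then show ?thesis using assms(1) by (intro exI[of _ "x mod N"]) auto
qed

lemma exists_nu:
  fixes q k :: nat
  assumes pp: "prime_power q" and k: "0 < k"
  shows "\<exists>\<nu>\<ge>1. (q - 1) dvd (q ^ \<nu> - 1) \<and> gcd (2 * k) (q ^ \<nu> - 1) dvd ((q ^ \<nu> - 1) div (q - 1)) \<and> 0 < q ^ \<nu> - 1"
proof -
  obtain p e where p: "prime p" "0 < e" "q = p ^ e" using pp unfolding prime_power_def by blast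
  have "2 \<le> p" using p(1) by (rule prime_ge_2_nat)
  moreover have "p \<le> p ^ e" using p(2) \<open>2 \<le> p\<close> by (intro self_le_power) auto
  ultimately have q2: "2 \<le> q" using p(3) by simp
  define n where "n = q - 1"
  have n: "0 < n" using q2 unfolding n_def by simp
  have nz: "2 * k \<noteq> 0" using k by simp
  have nu1: "\<not> is_unit p" using \<open>2 \<le> p\<close> by simp
  obtain K where K: "2 * k = p ^ multiplicity p (2 * k) * K" "\<not> p dvd K"
    using multiplicity_decompose'[OF nz nu1] by blast
  have Kpos: "0 < K" using K(1) nz by (cases K) auto
  define \<nu> where "\<nu> = totient (K * n)"
  have nu: "1 \<le> \<nu>" unfolding \<nu>_def using Kpos n by (simp add: Suc_le_eq)
  have "coprime p K" using K(2) p(1) by (simp add: prime_imp_coprime)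
  then have cqK: "coprime q K" using p by simp
  have qn: "q = Suc n" using q2 unfolding n_def by simp
  have cqn: "coprime q n" unfolding qn by (rule coprime_Suc_left_nat)
  have "coprime q (K * n)" using cqK cqn by simp
  from euler_theorem[OF this] have "[q ^ \<nu> = 1] (mod K * n)" unfolding \<nu>_def .
  then have Kn: "K * n dvd q ^ \<nu> - 1" by (rule cong_to_1_nat)
  define N where "N = q ^ \<nu> - 1"
  have qnu: "q \<le> q ^ \<nu>" using nu q2 by (intro self_le_power) auto
  have Npos: "0 < N" unfolding N_def using qnu q2 by simp
  have nN: "n dvd N" unfolding N_def by (rule dvd_trans[OF dvd_triv_right Kn])
  define m where "m = N div n"
  have Nm: "N = n * m" unfolding m_def using nN by simp
  have Km: "K dvd m" using Kn n unfolding N_def[symmetric] Nm by simp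
  have cNq: "coprime N q"
  proof (rule coprimeI)
    fix c assume cN: "c dvd N" and cq: "c dvd q"
    have "c dvd q ^ \<nu>" using dvd_trans[OF cq dvd_power[of \<nu> q]] nu by auto
    moreover have "q ^ \<nu> = N + 1" unfolding N_def using qnu q2 by simp
    ultimately have "c dvd N + 1" by simp
    then have "c dvd 1" using cN by (metis dvd_add_right_iff)
    then show "is_unit c" by simp
  qed
  have "coprime N p" using cNq p(2,3) by simp
  then have "coprime (gcd (2 * k) N) p" by (rule coprime_divisors[OF gcd_dvd2 dvd_refl])
  then have cg: "coprime (gcd (2 * k) N) (p ^ multiplicity p (2 * k))" by simp
  have "gcd (2 * k) N dvd p ^ multiplicity p (2 * k) * K" by (subst K(1)[symmetric]) (rule gcd_dvd1)
  then have "gcd (2 * k) N dvd K" using coprime_dvd_mult_right_iff[OF cg] by simp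
  then have "gcd (2 * k) N dvd m" using Km by (rule dvd_trans)
  then show ?thesis using nu nN Npos unfolding N_def m_def n_def by blast
qed


theorem lemma6p3:
  fixes q :: nat and cs :: "nat list"
  assumes "prime_power q"
    and "length cs \<ge> 2"
    and "valid_tuple (q - 1) cs"
    and "NIO (q - 1) cs"
  shows "\<exists>\<nu> c0. \<nu> \<ge> 1 \<and> c0 < q ^ \<nu> - 1 \<and> CGM (q ^ \<nu> - 1) (twist_lift q \<nu> c0 cs)"
proof -
  define k where "k = length cs"
  have kpos: "0 < k" and ne: "cs \<noteq> []" using assms(2) unfolding k_def by auto
  obtain \<nu> where nu: "\<nu> \<ge> 1" "(q - 1) dvd (q ^ \<nu> - 1)"
    "gcd (2 * k) (q ^ \<nu> - 1) dvd ((q ^ \<nu> - 1) div (q - 1))" "0 < q ^ \<nu> - 1"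
    using exists_nu[OF assms(1) kpos] by blast
  define n where "n = q - 1"
  define N where "N = q ^ \<nu> - 1"
  define m where "m = N div n"
  have Npos: "0 < N" using nu unfolding N_def by simp
  have npos: "0 < n" using nu(2) Npos unfolding n_def N_def by (cases "q - 1") auto
  have Nnm: "N = n * m" unfolding m_def using nu(2) unfolding N_def n_def by simp
  have mpos: "0 < m" using Npos Nnm by (cases m) auto
  have N: "N = m * n" using Nnm by simp
  have gm: "gcd (2 * k) N dvd m" using nu(3) unfolding N_def m_def n_def .
  have v: "valid_tuple n cs" using assms(3) unfolding n_def .
  define tw where "tw = (\<lambda>c0. map (\<lambda>c. (c0 + c * m) mod N) cs)"
  have twe: "twist_lift q \<nu> c0 cs = tw c0" for c0
    unfolding twist_lift_def tw_def m_def N_def n_def ..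
  have nk: "\<not> kummer_induced n cs" and nsym: "even k \<Longrightarrow> \<not> self_dual_symmetric n cs"
    using assms(4) unfolding NIO_def n_def k_def by auto
  have nkt: "\<not> kummer_induced N (tw c0)" for c0
    using kummer_lift[OF npos mpos N ne v] nk unfolding tw_def by blast
  have ltw: "length (tw c0) = k" for c0 unfolding tw_def k_def by simp
  have lam: "Lam N (tw c0) = (k * c0 + m * sum_list cs) mod N" for c0
    unfolding Lam_def tw_def k_def by (rule lam_twist)
  show ?thesis
  proof (cases "odd k \<or> \<not> self_dual n cs")
    case True
    have "gcd k N dvd gcd (2 * k) N" by (simp add: gcd_greatest)
    then have "gcd k N dvd m * sum_list cs" using gm by (meson dvd_trans dvd_mult2)
    then have "\<exists>x<N. (k * x + m * sum_list cs) mod N = 0" by (rule solve_lin[OF Npos])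
    then obtain c0 where c0: "c0 < N" "(k * c0 + m * sum_list cs) mod N = 0" by (elim exE conjE) (rule that)
    have "\<not> self_dual N (tw c0)" if "\<not> self_dual n cs"
      using selfdual_lift[OF npos mpos N ne v] that unfolding tw_def by blast
    then have "CGM N (tw c0)" unfolding CGM_def using nkt lam c0 True ltw by auto
    then have cg: "CGM N (twist_lift q \<nu> c0 cs)" by (simp only: twe)
    show ?thesis
      by (rule exI[of _ \<nu>], rule exI[of _ c0]) (use nu(1) c0(1) cg in \<open>simp only: N_def simp_thms\<close>)
  next
    case False
    then have ek: "even k" and sd: "self_dual n cs" by auto
    obtain xi where xi: "dualizing n cs xi" using sd unfolding self_dual_def by blast
    have lamn: "sum_list cs mod n = (k div 2 * xi) mod n"
      using nsym[OF ek] xi ek unfolding self_dual_symmetric_def Lam_def k_def by blast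
    have "gcd 2 N dvd gcd (2 * k) N" by (simp add: gcd_greatest)
    then have "gcd 2 N dvd m * xi" using gm by (meson dvd_trans dvd_mult2)
    then have "\<exists>x<N. (2 * x + m * xi) mod N = 0" by (rule solve_lin[OF Npos])
    then obtain c0 where c0: "c0 < N" "(2 * c0 + m * xi) mod N = 0" by (elim exE conjE) (rule that)
    have du: "dualizing N (tw c0) 0"
      using dual_twist[OF npos mpos N v xi c0(2)] unfolding tw_def .
    define h where "h = k div 2"
    have k2: "k = 2 * h" using ek unfolding h_def by simp
    have "N dvd 2 * c0 + m * xi" using c0(2) by (simp add: dvd_eq_mod_eq_0)
    then have d1: "int N dvd int (2 * c0 + m * xi)" by (simp only: int_dvd_int_iff)
    have "int n dvd int (sum_list cs) - int (h * xi)"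
      using lamn unfolding h_def by (simp only: mod_eq_dvd_iff[symmetric] of_nat_mod[symmetric])
    then have d2: "int N dvd int m * (int (sum_list cs) - int (h * xi))" unfolding N by simp
    have "int N dvd int h * int (2 * c0 + m * xi) + int m * (int (sum_list cs) - int (h * xi))"
      using d1 d2 by simp
    moreover have "int h * int (2 * c0 + m * xi) + int m * (int (sum_list cs) - int (h * xi)) = int (k * c0 + m * sum_list cs)"
      unfolding k2 by (simp add: algebra_simps)
    ultimately have "N dvd k * c0 + m * sum_list cs" by (simp only: int_dvd_int_iff)
    then have l0: "Lam N (tw c0) = 0" unfolding lam by simp
    have "CGM N (tw c0)" unfolding CGM_def alternating_wrt_def using nkt l0 du ek ltw by auto
    then have cg: "CGM N (twist_lift q \<nu> c0 cs)" by (simp only: twe)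
    show ?thesis
      by (rule exI[of _ \<nu>], rule exI[of _ c0]) (use nu(1) c0(1) cg in \<open>simp only: N_def simp_thms\<close>)
  qed
qed


end
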